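(* Let $a<b$ and let $A\in M_2(C[a,b])$ be such that $A(t)$ is hermitian for every $t\in[a,b]$ and $A$ is continuously differentiable on $[a,b]$ (entrywise). Suppose that $A(t)$ has two distinct eigenvalues for all $t\in[a,b]$ except possibly at finitely many points, and that at each such exceptional point $t$ the derivative $A'(t)$ has two distinct eigenvalues. Then there exists $U\in M_2(C[a,b])$ with $U(t)$ unitary for every $t\in[a,b]$ such that $U(t)^*A(t)U(t)$ is diagonal for all $t\in[a,b]$.
   Context: $C[a,b]$ denotes the continuous complex-valued functions on $[a,b]$; $M_2(C[a,b])$ the $2\times2$ matrices over it, viewed as continuous maps $[a,b]\to M_2(\mathbb{C})$. $A'(t)$ denotes the entrywise derivative. *)

theory Defs
  imports "HOL-Analysis.Analysis"
begin

text \<open>2x2 complex matrices are rendered as complex^2^2; a matrix-valued function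
 on [a,b] is a map real => complex^2^2 (only its values on [a,b] matter).\<close>

definition cmat_adj :: "complex^'n^'m \<Rightarrow> complex^'m^'n" where
  "cmat_adj M = (\<chi> i j. cnj (M $ j $ i))"

definition cmat_hermitian :: "complex^'n^'n \<Rightarrow> bool" where
  "cmat_hermitian M \<longleftrightarrow> cmat_adj M = M"

definition cmat_unitary :: "complex^'n^'n \<Rightarrow> bool" where
  "cmat_unitary U \<longleftrightarrow> cmat_adj U ** U = mat 1 \<and> U ** cmat_adj U = mat 1"

definition cmat_diagonal :: "complex^'n^'n \<Rightarrow> bool" where
  "cmat_diagonal M \<longleftrightarrow> (\<forall>i j. i \<noteq> j \<longrightarrow> M $ i $ j = 0)"

definition cmat_eigenvalue :: "complex^'n^'n \<Rightarrow> complex \<Rightarrow> bool" where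
  "cmat_eigenvalue M l \<longleftrightarrow> (\<exists>v. v \<noteq> 0 \<and> M *v v = l *s v)"

definition two_distinct_eigenvalues :: "complex^2^2 \<Rightarrow> bool" where
  "two_distinct_eigenvalues M \<longleftrightarrow>
     (\<exists>l m. l \<noteq> m \<and> cmat_eigenvalue M l \<and> cmat_eigenvalue M m)"

end

theory Submission
  imports Defs
begin


lemma L1:
  fixes v :: "real \<Rightarrow> 'a::real_normed_vector"
  assumes D: "(v has_vector_derivative v') (at z within S)" and vz: "v z = 0" and nz: "v' \<noteq> 0"
    and TS: "T \<subseteq> S" and sg: "\<forall>y\<in>T. z \<le> y \<or> y \<le> z" and c: "c = 1 \<or> c = -1"
    and sgn: "\<forall>y\<in>T. y \<noteq> z \<longrightarrow> (y - z) = c * \<bar>y - z\<bar>"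
  shows "((\<lambda>y. v y /\<^sub>R norm (v y)) \<longlongrightarrow> c *\<^sub>R (v' /\<^sub>R norm v')) (at z within T)"
proof -
  have "((\<lambda>y. (1 / norm(y - z)) *\<^sub>R (v y - (v z + (y - z) *\<^sub>R v'))) \<longlongrightarrow> 0) (at z within S)"
    using D unfolding has_vector_derivative_def has_derivative_within by blast
  then have T0: "((\<lambda>y. (1 / norm(y - z)) *\<^sub>R (v y - (v z + (y - z) *\<^sub>R v'))) \<longlongrightarrow> 0) (at z within T)"
    using TS tendsto_within_subset by blast
  have ev: "eventually (\<lambda>y. y \<noteq> z \<and> y \<in> T) (at z within T)"
    unfolding eventually_at by (auto intro: exI[of _ 1])
  have W: "((\<lambda>y. (1 / norm(y - z)) *\<^sub>R v y) \<longlongrightarrow> c *\<^sub>R v') (at z within T)"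
  proof -
    have "((\<lambda>y. (1 / norm(y - z)) *\<^sub>R (v y - (v z + (y - z) *\<^sub>R v')) + c *\<^sub>R v') \<longlongrightarrow> 0 + c *\<^sub>R v') (at z within T)"
      by (intro tendsto_add T0 tendsto_const)
    then have L: "((\<lambda>y. (1 / norm(y - z)) *\<^sub>R (v y - (v z + (y - z) *\<^sub>R v')) + c *\<^sub>R v') \<longlongrightarrow> c *\<^sub>R v') (at z within T)" by simp
    show ?thesis
    proof (rule Lim_transform_eventually[OF L])
      show "\<forall>\<^sub>F y in at z within T. (1 / norm(y - z)) *\<^sub>R (v y - (v z + (y - z) *\<^sub>R v')) + c *\<^sub>R v' = (1 / norm(y - z)) *\<^sub>R v y"
        using ev
      proof (rule eventually_mono)
        fix y assume y: "y \<noteq> z \<and> y \<in> T"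
        then have e: "y - z = c * \<bar>y - z\<bar>" using sgn by auto
        have ne: "\<bar>y - z\<bar> \<noteq> 0" using y by auto
        have q: "(1 / norm(y - z)) * (y - z) = c" using e ne by (simp add: field_simps)
        have "(1 / norm(y - z)) *\<^sub>R ((y - z) *\<^sub>R v') = c *\<^sub>R v'"
          by (simp only: scaleR_scaleR q)
        have q2: "(y - z) / \<bar>y - z\<bar> = c" using q by simp
        then show "(1 / norm(y - z)) *\<^sub>R (v y - (v z + (y - z) *\<^sub>R v')) + c *\<^sub>R v' = (1 / norm(y - z)) *\<^sub>R v y"
          by (simp add: vz scaleR_diff_right q2)
      qed
    qed
  qed
  have cn: "norm (c *\<^sub>R v') \<noteq> 0" using c nz by auto
  have N: "((\<lambda>y. inverse (norm ((1 / norm(y - z)) *\<^sub>R v y)) *\<^sub>R ((1 / norm(y - z)) *\<^sub>R v y)) \<longlongrightarrow>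
      inverse (norm (c *\<^sub>R v')) *\<^sub>R (c *\<^sub>R v')) (at z within T)"
    by (intro tendsto_intros W cn)
  have eqc: "inverse (norm (c *\<^sub>R v')) *\<^sub>R (c *\<^sub>R v') = c *\<^sub>R (v' /\<^sub>R norm v')"
    using c by auto
  from N have N2: "((\<lambda>y. inverse (norm ((1 / norm(y - z)) *\<^sub>R v y)) *\<^sub>R ((1 / norm(y - z)) *\<^sub>R v y)) \<longlongrightarrow>
      c *\<^sub>R (v' /\<^sub>R norm v')) (at z within T)" unfolding eqc .
  show ?thesis
  proof (rule Lim_transform_eventually[OF N2])
    show "\<forall>\<^sub>F y in at z within T. inverse (norm ((1 / norm(y - z)) *\<^sub>R v y)) *\<^sub>R ((1 / norm(y - z)) *\<^sub>R v y) = v y /\<^sub>R norm (v y)"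
      using ev
    proof (rule eventually_mono)
      fix y assume y: "y \<noteq> z \<and> y \<in> T"
      then have p: "\<bar>y - z\<bar> > 0" by auto
      show "inverse (norm ((1 / norm(y - z)) *\<^sub>R v y)) *\<^sub>R ((1 / norm(y - z)) *\<^sub>R v y) = v y /\<^sub>R norm (v y)"
        using p by (simp add: scaleR_scaleR field_simps)
    qed
  qed
qed

lemma LIFT_DIR:
  fixes v v' :: "real \<Rightarrow> 'a::real_normed_vector"
  assumes ab: "a < b" and cv: "continuous_on {a..b} v"
    and D: "\<forall>t\<in>{a..b}. (v has_vector_derivative v' t) (at t within {a..b})"
    and fin: "finite {t\<in>{a..b}. v t = 0}"
    and nz: "\<forall>t\<in>{a..b}. v t = 0 \<longrightarrow> v' t \<noteq> 0"
  shows "\<exists>n. continuous_on {a..b} n \<and> (\<forall>t\<in>{a..b}. (\<exists>c. (c = 1 \<or> c = -1) \<and>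
      n t = c *\<^sub>R (if v t = 0 then v' t /\<^sub>R norm (v' t) else v t /\<^sub>R norm (v t))))"
proof -
  define Z where "Z = {t\<in>{a..b}. v t = 0}"
  define s where "s t = (-1::real) ^ card {z\<in>Z. z < t}" for t
  define n where "n t = (if v t = 0 then s t *\<^sub>R (-(v' t /\<^sub>R norm (v' t))) else s t *\<^sub>R (v t /\<^sub>R norm (v t)))" for t
  have fZ: "finite Z" using fin Z_def by simp
  have s1: "s t = 1 \<or> s t = -1" for t
    unfolding s_def by (cases "even (card {z\<in>Z. z < t})") auto
  have P2: "\<forall>t\<in>{a..b}. (\<exists>c. (c = 1 \<or> c = -1) \<and>
      n t = c *\<^sub>R (if v t = 0 then v' t /\<^sub>R norm (v' t) else v t /\<^sub>R norm (v t)))"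
  proof
    fix t assume "t \<in> {a..b}"
    show "\<exists>c. (c = 1 \<or> c = -1) \<and>
      n t = c *\<^sub>R (if v t = 0 then v' t /\<^sub>R norm (v' t) else v t /\<^sub>R norm (v t))"
    proof (cases "v t = 0")
      case True
      then show ?thesis using s1[of t] by (intro exI[of _ "- s t"]) (auto simp: n_def)
    next
      case False
      then show ?thesis using s1[of t] by (intro exI[of _ "s t"]) (auto simp: n_def)
    qed
  qed
  have C: "continuous_on {a..b} n"
    unfolding continuous_on_eq_continuous_within
  proof
    fix t assume t: "t \<in> {a..b}"
    obtain e where e: "e > 0" and eZ: "\<forall>x\<in>Z. x \<noteq> t \<longrightarrow> e \<le> dist t x"
      using finite_set_avoid[OF fZ] by blast
    have cvt: "continuous (at t within {a..b}) v"
      using cv t continuous_on_eq_continuous_within by blast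
    show "continuous (at t within {a..b}) n"
    proof (cases "v t = 0")
      case False
      have eq: "s t *\<^sub>R (v y /\<^sub>R norm (v y)) = n y" if y: "y \<in> {a..b}" "dist y t < e" for y
      proof -
        have yZ: "y \<notin> Z"
        proof
          assume "y \<in> Z"
          moreover have "y \<noteq> t" using \<open>y \<in> Z\<close> False Z_def by auto
          ultimately show False using eZ y by (auto simp: dist_commute)
        qed
        have "{z\<in>Z. z < y} = {z\<in>Z. z < t}"
        proof -
          have "z < y \<longleftrightarrow> z < t" if "z \<in> Z" for z
          proof -
            have "z \<noteq> t" using that False Z_def by auto
            then have "e \<le> \<bar>t - z\<bar>" using eZ that by (auto simp: dist_real_def)
            then show ?thesis using y(2) by (auto simp: dist_real_def)
          qed
          then show ?thesis by auto
        qed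
        then have "s y = s t" by (simp add: s_def)
        then show ?thesis using yZ y Z_def by (auto simp: n_def)
      qed
      have "continuous (at t within {a..b}) (\<lambda>y. s t *\<^sub>R (v y /\<^sub>R norm (v y)))"
        using False by (intro continuous_intros cvt) auto
      then show ?thesis
        by (rule continuous_transform_within[OF _ e t]) (use eq in auto)
    next
      case True
      have tZ: "t \<in> Z" using True t Z_def by auto
      have Dt: "(v has_vector_derivative v' t) (at t within {a..b})" using D t by auto
      have nzt: "v' t \<noteq> 0" using nz t True by auto
      have nt: "n t = s t *\<^sub>R (-(v' t /\<^sub>R norm (v' t)))" using True by (simp add: n_def)
      have R: "(n \<longlongrightarrow> n t) (at t within {t..b})"
      proof -
        have "((\<lambda>y. v y /\<^sub>R norm (v y)) \<longlongrightarrow> 1 *\<^sub>R (v' t /\<^sub>R norm (v' t))) (at t within {t..b})"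
          by (rule L1[OF Dt True nzt]) (use t in auto)
        then have "((\<lambda>y. (- s t) *\<^sub>R (v y /\<^sub>R norm (v y))) \<longlongrightarrow> (- s t) *\<^sub>R (1 *\<^sub>R (v' t /\<^sub>R norm (v' t)))) (at t within {t..b})"
          by (rule tendsto_scaleR[OF tendsto_const])
        then have L: "((\<lambda>y. (- s t) *\<^sub>R (v y /\<^sub>R norm (v y))) \<longlongrightarrow> n t) (at t within {t..b})"
          by (simp add: nt)
        show ?thesis
        proof (rule Lim_transform_within[OF L e])
          fix y assume y: "y \<in> {t..b}" "0 < dist y t" "dist y t < e"
          have yZ: "y \<notin> Z"
          proof
            assume "y \<in> Z"
            moreover have "y \<noteq> t" using y by auto
            ultimately show False using eZ y by (auto simp: dist_commute)
          qed
          have "{z\<in>Z. z < y} = insert t {z\<in>Z. z < t}"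
          proof -
            have "z < y \<longleftrightarrow> z < t \<or> z = t" if "z \<in> Z" for z
            proof (cases "z = t")
              case False
              then have "e \<le> \<bar>t - z\<bar>" using eZ that by (auto simp: dist_real_def)
              then show ?thesis using y by (auto simp: dist_real_def)
            qed (use y in auto)
            then show ?thesis using tZ by auto
          qed
          then have "card {z\<in>Z. z < y} = Suc (card {z\<in>Z. z < t})"
            using fZ by simp
          then have "s y = - s t" by (simp add: s_def)
          then show "(- s t) *\<^sub>R (v y /\<^sub>R norm (v y)) = n y"
            using yZ y t Z_def by (auto simp: n_def)
        qed
      qed
      have L': "(n \<longlongrightarrow> n t) (at t within {a..t})"
      proof -
        have "((\<lambda>y. v y /\<^sub>R norm (v y)) \<longlongrightarrow> (-1) *\<^sub>R (v' t /\<^sub>R norm (v' t))) (at t within {a..t})"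
          by (rule L1[OF Dt True nzt]) (use t in auto)
        then have "((\<lambda>y. s t *\<^sub>R (v y /\<^sub>R norm (v y))) \<longlongrightarrow> s t *\<^sub>R ((-1) *\<^sub>R (v' t /\<^sub>R norm (v' t)))) (at t within {a..t})"
          by (rule tendsto_scaleR[OF tendsto_const])
        then have L: "((\<lambda>y. s t *\<^sub>R (v y /\<^sub>R norm (v y))) \<longlongrightarrow> n t) (at t within {a..t})"
          by (simp add: nt)
        show ?thesis
        proof (rule Lim_transform_within[OF L e])
          fix y assume y: "y \<in> {a..t}" "0 < dist y t" "dist y t < e"
          have yZ: "y \<notin> Z"
          proof
            assume "y \<in> Z"
            moreover have "y \<noteq> t" using y by auto
            ultimately show False using eZ y by (auto simp: dist_commute)
          qed
          have "{z\<in>Z. z < y} = {z\<in>Z. z < t}"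
          proof -
            have "z < y \<longleftrightarrow> z < t" if "z \<in> Z" for z
            proof (cases "z = t")
              case False
              then have "e \<le> \<bar>t - z\<bar>" using eZ that by (auto simp: dist_real_def)
              then show ?thesis using y by (auto simp: dist_real_def)
            qed (use y in auto)
            then show ?thesis by auto
          qed
          then have "s y = s t" by (simp add: s_def)
          then show "s t *\<^sub>R (v y /\<^sub>R norm (v y)) = n y"
            using yZ y t Z_def by (auto simp: n_def)
        qed
      qed
      have "{a..b} = {a..t} \<union> {t..b}" using t by auto
      then show ?thesis unfolding continuous_within using R L' Lim_within_Un by metis
    qed
  qed
  show ?thesis using C P2 by blast
qed



lemma NV:
  fixes w1 w2 al be ga de :: complex
  assumes "w1 = al*w1 + be*w2" "w2 = ga*w1 + de*w2"
    "norm al \<le> 1/4" "norm be \<le> 1/4" "norm ga \<le> 1/4" "norm de \<le> 1/4"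
  shows "w1 = 0 \<and> w2 = 0"
proof -
  have a: "norm w1 \<le> norm al * norm w1 + norm be * norm w2"
    using assms(1) norm_triangle_ineq[of "al*w1" "be*w2"] by (metis norm_mult)
  have b: "norm w2 \<le> norm ga * norm w1 + norm de * norm w2"
    using assms(2) norm_triangle_ineq[of "ga*w1" "de*w2"] by (metis norm_mult)
  have "norm al * norm w1 \<le> 1/4 * norm w1" using assms(3) by (intro mult_right_mono) auto
  moreover have "norm be * norm w2 \<le> 1/4 * norm w2" using assms(4) by (intro mult_right_mono) auto
  moreover have "norm ga * norm w1 \<le> 1/4 * norm w1" using assms(5) by (intro mult_right_mono) auto
  moreover have "norm de * norm w2 \<le> 1/4 * norm w2" using assms(6) by (intro mult_right_mono) auto
  ultimately have "norm w1 + norm w2 \<le> 0" using a b by linarith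
  then show ?thesis by (smt (verit) norm_ge_zero norm_le_zero_iff)
qed

lemma FIX1:
  fixes d q w1 w2 :: complex
  assumes h: "d*d + q*cnj q = 1"
  shows "d*((1+d)/2*w1 + q/2*w2) + q*(cnj q/2*w1 + (1-d)/2*w2) = (1+d)/2*w1 + q/2*w2"
    and "cnj q*((1+d)/2*w1 + q/2*w2) - d*(cnj q/2*w1 + (1-d)/2*w2) = cnj q/2*w1 + (1-d)/2*w2"
proof -
  have e: "q*cnj q = 1 - d*d" using h by (simp add: algebra_simps)
  show "d*((1+d)/2*w1 + q/2*w2) + q*(cnj q/2*w1 + (1-d)/2*w2) = (1+d)/2*w1 + q/2*w2"
  proof -
    have "d*((1+d)/2*w1 + q/2*w2) + q*(cnj q/2*w1 + (1-d)/2*w2) = (d + d*d + q*cnj q)/2*w1 + q/2*w2"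
      by (simp add: field_simps)
    also have "\<dots> = (1+d)/2*w1 + q/2*w2" using h by (simp add: algebra_simps)
    finally show ?thesis .
  qed
  show "cnj q*((1+d)/2*w1 + q/2*w2) - d*(cnj q/2*w1 + (1-d)/2*w2) = cnj q/2*w1 + (1-d)/2*w2"
  proof -
    have "cnj q*((1+d)/2*w1 + q/2*w2) - d*(cnj q/2*w1 + (1-d)/2*w2) = cnj q/2*w1 + (q*cnj q - d + d*d)/2*w2"
      by (simp add: field_simps)
    also have "\<dots> = cnj q/2*w1 + (1-d)/2*w2" using e by (simp add: algebra_simps)
    finally show ?thesis .
  qed
qed

lemma LIFT_VEC:
  fixes nd nq :: "real \<Rightarrow> complex"
  assumes ab: "a \<le> b" and c1: "continuous_on {a..b} nd" and c2: "continuous_on {a..b} nq"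
    and un: "\<forall>t\<in>{a..b}. nd t * nd t + nq t * cnj (nq t) = 1"
  shows "\<exists>u1 u2. continuous_on {a..b} u1 \<and> continuous_on {a..b} u2 \<and>
     (\<forall>t\<in>{a..b}. (u1 t \<noteq> 0 \<or> u2 t \<noteq> 0) \<and> nd t * u1 t + nq t * u2 t = u1 t \<and>
        cnj (nq t) * u1 t - nd t * u2 t = u2 t)"
proof -
  define good where "good t x y \<longleftrightarrow> (x \<noteq> 0 \<or> y \<noteq> 0) \<and> nd t * x + nq t * y = x \<and>
        cnj (nq t) * x - nd t * y = y" for t x y
  define Q where "Q s \<longleftrightarrow> (\<exists>u1 u2. continuous_on {a..s} u1 \<and> continuous_on {a..s} u2 \<and>
     (\<forall>t\<in>{a..s}. good t (u1 t) (u2 t)))" for s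
  define P1 where "P1 t w1 w2 = (1 + nd t)/2 * w1 + nq t/2 * w2" for t w1 w2
  define P2 where "P2 t w1 w2 = cnj (nq t)/2 * w1 + (1 - nd t)/2 * w2" for t w1 w2
  have fixP: "nd t * P1 t w1 w2 + nq t * P2 t w1 w2 = P1 t w1 w2 \<and>
      cnj (nq t) * P1 t w1 w2 - nd t * P2 t w1 w2 = P2 t w1 w2" if "t \<in> {a..b}" for t w1 w2
    using FIX1[OF un[rule_format, OF that]] unfolding P1_def P2_def by blast
  have idP: "P1 t w1 w2 = w1 \<and> P2 t w1 w2 = w2" if "good t w1 w2" for t w1 w2
  proof -
    have h1: "nd t * w1 + nq t * w2 = w1" and h2: "cnj (nq t) * w1 - nd t * w2 = w2"
      using that good_def by auto
    have "P1 t w1 w2 = (w1 + (nd t * w1 + nq t * w2))/2" by (simp add: P1_def field_simps)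
    also have "\<dots> = w1" using h1 by simp
    finally have A: "P1 t w1 w2 = w1" .
    have "P2 t w1 w2 = (w2 + (cnj (nq t) * w1 - nd t * w2))/2" by (simp add: P2_def field_simps)
    also have "\<dots> = w2" using h2 by simp
    finally show ?thesis using A by simp
  qed
  have ucd: "uniformly_continuous_on {a..b} nd" using c1 compact_uniformly_continuous by blast
  have ucq: "uniformly_continuous_on {a..b} nq" using c2 compact_uniformly_continuous by blast
  obtain d1 where d1: "d1 > 0" "\<forall>x\<in>{a..b}. \<forall>x'\<in>{a..b}. dist x' x < d1 \<longrightarrow> dist (nd x') (nd x) < 1/2"
    using ucd unfolding uniformly_continuous_on_def by (meson half_gt_zero zero_less_one)
  obtain d2 where d2: "d2 > 0" "\<forall>x\<in>{a..b}. \<forall>x'\<in>{a..b}. dist x' x < d2 \<longrightarrow> dist (nq x') (nq x) < 1/2"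
    using ucq unfolding uniformly_continuous_on_def by (meson half_gt_zero zero_less_one)
  define dl where "dl = min d1 d2"
  have dl: "dl > 0" using d1 d2 dl_def by simp
  have nonv: "P1 t w1 w2 \<noteq> 0 \<or> P2 t w1 w2 \<noteq> 0"
    if s: "s \<in> {a..b}" and t: "t \<in> {a..b}" and st: "dist t s < dl" and g: "good s w1 w2" for s t w1 w2
  proof (rule ccontr)
    assume "\<not> (P1 t w1 w2 \<noteq> 0 \<or> P2 t w1 w2 \<noteq> 0)"
    then have z1: "P1 t w1 w2 = 0" and z2: "P2 t w1 w2 = 0" by auto
    have i1: "P1 s w1 w2 = w1" and i2: "P2 s w1 w2 = w2" using idP[OF g] by auto
    have e1: "w1 = ((nd s - nd t)/2) * w1 + ((nq s - nq t)/2) * w2"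
    proof -
      have "w1 = P1 s w1 w2 - P1 t w1 w2" using i1 z1 by simp
      also have "\<dots> = ((nd s - nd t)/2) * w1 + ((nq s - nq t)/2) * w2"
        by (simp add: P1_def field_simps)
      finally show ?thesis .
    qed
    have e2: "w2 = (cnj (nq s - nq t)/2) * w1 + (- (nd s - nd t)/2) * w2"
    proof -
      have "w2 = P2 s w1 w2 - P2 t w1 w2" using i2 z2 by simp
      also have "\<dots> = (cnj (nq s - nq t)/2) * w1 + (- (nd s - nd t)/2) * w2"
        by (simp add: P2_def field_simps)
      finally show ?thesis .
    qed
    have nd1: "norm (nd s - nd t) < 1/2"
      using d1(2) s t st dl_def by (auto simp: dist_norm)
    have nq1: "norm (nq s - nq t) < 1/2"
      using d2(2) s t st dl_def by (auto simp: dist_norm)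
    have cc: "cmod (cnj (nq s) - cnj (nq t)) = cmod (nq s - nq t)"
      by (metis complex_cnj_diff complex_mod_cnj)
    have "w1 = 0 \<and> w2 = 0"
      by (rule NV[OF e1 e2]) (use nd1 nq1 cc in \<open>auto simp: norm_divide norm_minus_commute\<close>)
    then show False using g good_def by auto
  qed
  have Qa: "Q a"
  proof -
    obtain w1 w2 where ne: "P1 a w1 w2 \<noteq> 0 \<or> P2 a w1 w2 \<noteq> 0"
    proof (cases "nd a = -1")
      case True
      then have "P2 a 0 1 \<noteq> 0" by (simp add: P2_def)
      then show ?thesis using that by blast
    next
      case False
      then have "1 + nd a \<noteq> 0" by (metis add.commute add_eq_0_iff)
      then have "P1 a 1 0 \<noteq> 0" by (simp add: P1_def)
      then show ?thesis using that by blast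
    qed
    have "good a (P1 a w1 w2) (P2 a w1 w2)"
      using ne fixP[of a w1 w2] ab unfolding good_def by auto
    then show ?thesis unfolding Q_def
      by (intro exI[of _ "\<lambda>_. P1 a w1 w2"] exI[of _ "\<lambda>_. P2 a w1 w2"]) auto
  qed
  have step: "Q (min b (s + dl/2))" if s: "s \<in> {a..b}" and Qs: "Q s" for s
  proof -
    obtain u1 u2 where cu1: "continuous_on {a..s} u1" and cu2: "continuous_on {a..s} u2"
      and gu: "\<forall>t\<in>{a..s}. good t (u1 t) (u2 t)" using Qs Q_def by blast
    define s' where "s' = min b (s + dl/2)"
    define w1 where "w1 = u1 s"
    define w2 where "w2 = u2 s"
    have gs: "good s w1 w2" using gu s w1_def w2_def by auto
    have sub: "{s..s'} \<subseteq> {a..b}" using s s'_def by auto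
    have un': "{a..s'} = {a..s} \<union> {s..s'}" using s s'_def dl by auto
    have cnd: "continuous_on {s..s'} nd" using c1 sub continuous_on_subset by blast
    have cnq: "continuous_on {s..s'} nq" using c2 sub continuous_on_subset by blast
    have cP1: "continuous_on {s..s'} (\<lambda>t. P1 t w1 w2)"
      unfolding P1_def by (intro continuous_intros cnd cnq) auto
    have cP2: "continuous_on {s..s'} (\<lambda>t. P2 t w1 w2)"
      unfolding P2_def by (intro continuous_intros cnd cnq) auto
    have ids: "P1 s w1 w2 = w1" "P2 s w1 w2 = w2" using idP[OF gs] by auto
    have ag1: "\<forall>t. t \<in> {a..s} \<and> \<not> t \<le> s \<or> t \<in> {s..s'} \<and> t \<le> s \<longrightarrow> u1 t = P1 t w1 w2"
    proof (intro allI impI)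
      fix t assume "t \<in> {a..s} \<and> \<not> t \<le> s \<or> t \<in> {s..s'} \<and> t \<le> s"
      then have "t = s" by auto
      then show "u1 t = P1 t w1 w2" using ids w1_def by simp
    qed
    have ag2: "\<forall>t. t \<in> {a..s} \<and> \<not> t \<le> s \<or> t \<in> {s..s'} \<and> t \<le> s \<longrightarrow> u2 t = P2 t w1 w2"
    proof (intro allI impI)
      fix t assume "t \<in> {a..s} \<and> \<not> t \<le> s \<or> t \<in> {s..s'} \<and> t \<le> s"
      then have "t = s" by auto
      then show "u2 t = P2 t w1 w2" using ids w2_def by simp
    qed
    have C1: "continuous_on {a..s'} (\<lambda>t. if t \<le> s then u1 t else P1 t w1 w2)"
      unfolding un' by (rule continuous_on_cases[OF closed_atLeastAtMost closed_atLeastAtMost cu1 cP1])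
         (use ag1 in blast)
    have C2: "continuous_on {a..s'} (\<lambda>t. if t \<le> s then u2 t else P2 t w1 w2)"
      unfolding un' by (rule continuous_on_cases[OF closed_atLeastAtMost closed_atLeastAtMost cu2 cP2])
         (use ag2 in blast)
    have G: "good t (if t \<le> s then u1 t else P1 t w1 w2) (if t \<le> s then u2 t else P2 t w1 w2)"
      if t: "t \<in> {a..s'}" for t
    proof (cases "t \<le> s")
      case True
      then show ?thesis using gu t by auto
    next
      case False
      then have tt: "t \<in> {a..b}" "dist t s < dl" using t s'_def s dl by (auto simp: dist_real_def)
      show ?thesis using False nonv[OF s tt gs] fixP[OF tt(1)] unfolding good_def by auto
    qed
    show ?thesis unfolding Q_def s'_def[symmetric] using C1 C2 G by blast
  qed
  have allk: "Q (min b (a + real k * (dl/2)))" for k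
  proof (induction k)
    case 0
    then show ?case using Qa ab by (simp add: min_absorb2)
  next
    case (Suc k)
    have mem: "min b (a + real k * (dl/2)) \<in> {a..b}" using ab dl by auto
    have eq: "min b (min b (a + real k * (dl/2)) + dl/2) = min b (a + real (Suc k) * (dl/2))"
    proof -
      have e1: "a + real (Suc k) * (dl/2) = (a + real k * (dl/2)) + dl/2" by (simp add: algebra_simps)
      show ?thesis unfolding e1 using dl by (simp add: min_def)
    qed
    from step[OF mem Suc.IH] show ?case unfolding eq .
  qed
  obtain k where k: "(b - a) / (dl/2) < real k" using reals_Archimedean2 by blast
  then have "b - a < real k * (dl/2)" using dl by (simp add: field_simps)
  then have "min b (a + real k * (dl/2)) = b" by simp
  with allk[of k] have "Q b" by simp
  then show ?thesis unfolding Q_def good_def by blast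
qed



definition mkU :: "complex \<Rightarrow> complex \<Rightarrow> complex^2^2" where
  "mkU x y = (\<chi> i j. if i = 1 then (if j = 1 then x else - cnj y) else (if j = 1 then y else cnj x))"

lemma mkU_nth: "mkU x y $ 1 $ 1 = x" "mkU x y $ 1 $ 2 = - cnj y" "mkU x y $ 2 $ 1 = y" "mkU x y $ 2 $ 2 = cnj x"
  by (simp_all add: mkU_def)

lemma herm_entry: "cmat_hermitian M \<Longrightarrow> M $ i $ j = cnj (M $ j $ i)"
  unfolding cmat_hermitian_def cmat_adj_def by (metis vec_lambda_beta)

lemma compd: "(f has_vector_derivative f') F \<Longrightarrow> ((\<lambda>x. f x $ i $ j) has_vector_derivative f' $ i $ j) F"
  by (rule bounded_linear.has_vector_derivative[OF bounded_linear_vec_nth,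
        OF bounded_linear.has_vector_derivative[OF bounded_linear_vec_nth]])

lemma scal_not2:
  fixes M :: "complex^2^2"
  assumes a1: "M$1$2 = 0" and a2: "M$2$1 = 0" and a3: "M$1$1 = M$2$2"
  shows "\<not> two_distinct_eigenvalues M"
proof -
  have "l = M$2$2" if E: "cmat_eigenvalue M l" for l
  proof -
    obtain w where w: "w \<noteq> 0" "M *v w = l *s w" using E unfolding cmat_eigenvalue_def by blast
    have c1: "(M *v w)$1 = (l *s w)$1" using w by simp
    then have d1: "M$2$2 * w$1 = l * w$1" by (simp add: matrix_vector_mult_def sum_2 a1 a3)
    have c2: "(M *v w)$2 = (l *s w)$2" using w by simp
    then have d2: "M$2$2 * w$2 = l * w$2" by (simp add: matrix_vector_mult_def sum_2 a2)
    have "w$1 \<noteq> 0 \<or> w$2 \<noteq> 0"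
    proof (rule ccontr)
      assume "\<not> ?thesis"
      then have "\<forall>i. w$i = 0$i" using exhaust_2 by (metis zero_index)
      then show False using w(1) vec_eq_iff by blast
    qed
    then show ?thesis using d1 d2 by auto
  qed
  then show ?thesis unfolding two_distinct_eigenvalues_def by blast
qed

lemma unit_mkU:
  assumes n: "x * cnj x + y * cnj y = 1"
  shows "cmat_unitary (mkU x y)"
proof -
  have n2: "cnj x * x + cnj y * y = 1" using n by (simp add: mult.commute)
  show ?thesis
  unfolding cmat_unitary_def
  by (simp add: vec_eq_iff forall_2 matrix_matrix_mult_def sum_2 cmat_adj_def mkU_nth mat_def n n2 algebra_simps)
qed

lemma diag_mkU:
  fixes M :: "complex^2^2"
  assumes h1: "cnj (M$1$1) = M$1$1" and h2: "cnj (M$2$2) = M$2$2" and h3: "M$2$1 = cnj (M$1$2)"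
    and e1: "M$1$1 * x + M$1$2 * y = l * x" and e2: "M$2$1 * x + M$2$2 * y = l * y"
  shows "cmat_diagonal (cmat_adj (mkU x y) ** M ** mkU x y)"
proof -
  have e1': "M$1$1 * cnj x + cnj (M$1$2) * cnj y = cnj l * cnj x"
    using arg_cong[OF e1, of cnj] h1 by simp
  have e2': "M$1$2 * cnj x + M$2$2 * cnj y = cnj l * cnj y"
    using arg_cong[OF e2, of cnj] h2 h3 by simp
  have A: "(cmat_adj (mkU x y) ** M ** mkU x y) $ 1 $ 2 = 0"
  proof -
    have "(cmat_adj (mkU x y) ** M ** mkU x y) $ 1 $ 2 =
      cnj x * (M$1$1 * (- cnj y) + M$1$2 * cnj x) + cnj y * (M$2$1 * (- cnj y) + M$2$2 * cnj x)"
      by (simp add: matrix_matrix_mult_def sum_2 cmat_adj_def mkU_nth algebra_simps)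
    also have "\<dots> = cnj x * (M$1$2 * cnj x + M$2$2 * cnj y) - cnj y * (M$1$1 * cnj x + cnj (M$1$2) * cnj y)"
      using h3 by (simp add: algebra_simps)
    also have "\<dots> = 0" by (simp only: e1' e2') (simp add: algebra_simps)
    finally show ?thesis .
  qed
  have B: "(cmat_adj (mkU x y) ** M ** mkU x y) $ 2 $ 1 = 0"
  proof -
    have "(cmat_adj (mkU x y) ** M ** mkU x y) $ 2 $ 1 =
      (- y) * (M$1$1 * x + M$1$2 * y) + x * (M$2$1 * x + M$2$2 * y)"
      by (simp add: matrix_matrix_mult_def sum_2 cmat_adj_def mkU_nth algebra_simps)
    also have "\<dots> = 0" by (simp only: e1 e2) (simp add: algebra_simps)
    finally show ?thesis .
  qed
  show ?thesis unfolding cmat_diagonal_def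
  proof (intro allI impI)
    fix i j :: 2 assume "i \<noteq> j"
    then show "(cmat_adj (mkU x y) ** M ** mkU x y) $ i $ j = 0"
      using A B exhaust_2[of i] exhaust_2[of j] by auto
  qed
qed



lemma realI:
  fixes z :: complex
  assumes h: "z = cnj z"
  shows "Im z = 0"
proof -
  have "Im z = Im (cnj z)" using h by (rule arg_cong)
  then show ?thesis by simp
qed

lemma EIG:
  fixes d11 d22 d12 d21 x y :: complex and k :: real
  assumes k: "k \<noteq> 0"
    and f1: "of_real k * (d11 - d22) * x + of_real k * (2 * d12) * y = x"
    and f2: "cnj (of_real k * (2 * d12)) * x - of_real k * (d11 - d22) * y = y"
    and h: "d21 = cnj d12"
  shows "d11 * x + d12 * y = ((d11 + d22)/2 + 1/(2 * of_real k)) * x \<and>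
         d21 * x + d22 * y = ((d11 + d22)/2 + 1/(2 * of_real k)) * y"
proof -
  have K: "(of_real k :: complex) \<noteq> 0" using k by simp
  have g1: "(d11 - d22) * x + 2 * d12 * y = x / of_real k"
    using f1 K by (simp add: field_simps)
  have g2: "2 * d21 * x - (d11 - d22) * y = y / of_real k"
    using f2 K h by (simp add: field_simps)
  have A: "d11 * x + d12 * y = ((d11 + d22)/2 + 1/(2 * of_real k)) * x"
  proof -
    have "d11 * x + d12 * y = ((d11 + d22) * x + ((d11 - d22) * x + 2 * d12 * y)) / 2"
      by (simp add: field_simps)
    also have "\<dots> = ((d11 + d22) * x + x / of_real k) / 2" by (simp only: g1)
    also have "\<dots> = ((d11 + d22)/2 + 1/(2 * of_real k)) * x" using K by (simp add: field_simps)
    finally show ?thesis .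
  qed
  have B: "d21 * x + d22 * y = ((d11 + d22)/2 + 1/(2 * of_real k)) * y"
  proof -
    have "d21 * x + d22 * y = ((d11 + d22) * y + (2 * d21 * x - (d11 - d22) * y)) / 2"
      by (simp add: field_simps)
    also have "\<dots> = ((d11 + d22) * y + y / of_real k) / 2" by (simp only: g2)
    also have "\<dots> = ((d11 + d22)/2 + 1/(2 * of_real k)) * y" using K by (simp add: field_simps)
    finally show ?thesis .
  qed
  show ?thesis using A B by blast
qed

theorem mainTheorem4:
  fixes a b :: real and A A' :: "real \<Rightarrow> complex^2^2"
  assumes "a < b"
    and "continuous_on {a..b} A"
    and "\<forall>t\<in>{a..b}. cmat_hermitian (A t)"
    and "\<forall>t\<in>{a..b}. (A has_vector_derivative A' t) (at t within {a..b})"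
    and "continuous_on {a..b} A'"
    and "finite {t\<in>{a..b}. \<not> two_distinct_eigenvalues (A t)}"
    and "\<forall>t\<in>{a..b}. \<not> two_distinct_eigenvalues (A t) \<longrightarrow> two_distinct_eigenvalues (A' t)"
  shows "\<exists>U :: real \<Rightarrow> complex^2^2. continuous_on {a..b} U \<and>
           (\<forall>t\<in>{a..b}. cmat_unitary (U t) \<and>
              cmat_diagonal (cmat_adj (U t) ** A t ** U t))"
proof -
  note ab = assms(1)
  have herm: "A t $ i $ j = cnj (A t $ j $ i)" if "t \<in> {a..b}" for t i j
    using assms(3) that herm_entry by blast
  have dA: "((\<lambda>s. A s $ i $ j) has_vector_derivative A' t $ i $ j) (at t within {a..b})"
    if "t \<in> {a..b}" for t i j
    using assms(4) that compd by blast
  have herm': "A' t $ i $ j = cnj (A' t $ j $ i)" if t: "t \<in> {a..b}" for t i j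
  proof -
    have D1: "((\<lambda>s. cnj (A s $ j $ i)) has_vector_derivative cnj (A' t $ j $ i)) (at t within {a..b})"
      by (rule has_vector_derivative_cnj[OF dA[OF t]])
    have D2: "((\<lambda>s. A s $ i $ j) has_vector_derivative cnj (A' t $ j $ i)) (at t within {a..b})"
      by (rule has_vector_derivative_transform[OF t _ D1]) (erule herm)
    show ?thesis
      using vector_derivative_unique_within_closed_interval[OF ab, of t "\<lambda>s. A s $ i $ j"] dA[OF t] D2 t
      unfolding cbox_interval by blast
  qed
  define v where "v t = (A t$1$1 - A t$2$2, 2 * A t$1$2)" for t
  define v' where "v' t = (A' t$1$1 - A' t$2$2, 2 * A' t$1$2)" for t
  have cv: "continuous_on {a..b} v"
    unfolding v_def by (intro continuous_intros assms(2))
  have dv: "\<forall>t\<in>{a..b}. (v has_vector_derivative v' t) (at t within {a..b})"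
    unfolding v_def v'_def by (intro ballI has_vector_derivative_Pair has_vector_derivative_diff
        has_vector_derivative_mult_right dA)
  define E where "E = {t\<in>{a..b}. \<not> two_distinct_eigenvalues (A t)}"
  have zE: "t \<in> E" if t: "t \<in> {a..b}" and vt: "v t = 0" for t
  proof -
    have "A t$1$1 = A t$2$2" "A t$1$2 = 0" using vt by (auto simp: v_def zero_prod_def)
    moreover then have "A t$2$1 = 0" using herm[OF t, of 2 1] by simp
    ultimately show ?thesis using scal_not2[of "A t"] t E_def by auto
  qed
  have fin: "finite {t\<in>{a..b}. v t = 0}"
    by (rule finite_subset[OF _ assms(6)[folded E_def]]) (use zE in auto)
  have nz: "\<forall>t\<in>{a..b}. v t = 0 \<longrightarrow> v' t \<noteq> 0"
  proof (intro ballI impI)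
    fix t assume t: "t \<in> {a..b}" and vt: "v t = 0"
    show "v' t \<noteq> 0"
    proof
      assume v't: "v' t = 0"
      have "A' t$1$1 = A' t$2$2" "A' t$1$2 = 0" using v't by (auto simp: v'_def zero_prod_def)
      moreover then have "A' t$2$1 = 0" using herm'[OF t, of 2 1] by simp
      ultimately have "\<not> two_distinct_eigenvalues (A' t)" using scal_not2[of "A' t"] by auto
      moreover have "\<not> two_distinct_eigenvalues (A t)" using zE[OF t vt] E_def by auto
      ultimately show False using assms(7) t by auto
    qed
  qed
  obtain n where cn: "continuous_on {a..b} n" and nform: "\<forall>t\<in>{a..b}. (\<exists>c. (c = 1 \<or> c = -1) \<and>
      n t = c *\<^sub>R (if v t = 0 then v' t /\<^sub>R norm (v' t) else v t /\<^sub>R norm (v t)))"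
    using LIFT_DIR[OF ab cv dv fin nz] by blast
  define nd where "nd t = fst (n t)" for t
  define nq where "nq t = snd (n t)" for t
  have cnd: "continuous_on {a..b} nd" unfolding nd_def by (intro continuous_intros cn)
  have cnq: "continuous_on {a..b} nq" unfolding nq_def by (intro continuous_intros cn)
  have un: "\<forall>t\<in>{a..b}. nd t * nd t + nq t * cnj (nq t) = 1"
  proof
    fix t assume t: "t \<in> {a..b}"
    obtain c where c: "c = 1 \<or> c = -1" and
      nt: "n t = c *\<^sub>R (if v t = 0 then v' t /\<^sub>R norm (v' t) else v t /\<^sub>R norm (v t))"
      using nform t by blast
    define w where "w = (if v t = 0 then v' t else v t)"
    have w0: "w \<noteq> 0" using nz t w_def by auto
    have nt': "n t = c *\<^sub>R (w /\<^sub>R norm w)" using nt w_def by auto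
    have r1: "Im (A t$1$1) = 0" "Im (A t$2$2) = 0" "Im (A' t$1$1) = 0" "Im (A' t$2$2) = 0"
      using realI[OF herm[OF t, of 1 1]] realI[OF herm[OF t, of 2 2]]
        realI[OF herm'[OF t, of 1 1]] realI[OF herm'[OF t, of 2 2]] by auto
    have imw: "Im (fst w) = 0" using r1 by (auto simp: w_def v_def v'_def)
    have "norm (n t) = 1" using nt' w0 c by auto
    moreover have "n t = (nd t, nq t)" by (simp add: nd_def nq_def)
    ultimately have "sqrt (norm (nd t)^2 + norm (nq t)^2) = 1" by (simp add: norm_Pair)
    then have N1: "norm (nd t)^2 + norm (nq t)^2 = 1" by simp
    have "Im (nd t) = 0" using imw unfolding nd_def nt' by simp
    then have cc: "cnj (nd t) = nd t" by (simp add: complex_eq_iff)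
    have "nd t * nd t = of_real (norm (nd t)^2)"
      using complex_norm_square[of "nd t"] cc by simp
    moreover have "nq t * cnj (nq t) = of_real (norm (nq t)^2)" by (rule complex_norm_square[symmetric])
    ultimately have "nd t * nd t + nq t * cnj (nq t) = of_real (norm (nd t)^2 + norm (nq t)^2)" by simp
    then show "nd t * nd t + nq t * cnj (nq t) = 1" using N1 by simp
  qed
  obtain u1 u2 where cu1: "continuous_on {a..b} u1" and cu2: "continuous_on {a..b} u2"
    and gu: "\<forall>t\<in>{a..b}. (u1 t \<noteq> 0 \<or> u2 t \<noteq> 0) \<and> nd t * u1 t + nq t * u2 t = u1 t \<and>
        cnj (nq t) * u1 t - nd t * u2 t = u2 t"
    using LIFT_VEC[OF _ cnd cnq un] ab by auto
  have eig: "\<exists>l. A t$1$1 * u1 t + A t$1$2 * u2 t = l * u1 t \<and> A t$2$1 * u1 t + A t$2$2 * u2 t = l * u2 t"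
    if t: "t \<in> {a..b}" for t
  proof (cases "v t = 0")
    case True
    have "A t$1$1 = A t$2$2" "A t$1$2 = 0" using True by (auto simp: v_def zero_prod_def)
    moreover then have "A t$2$1 = 0" using herm[OF t, of 2 1] by simp
    ultimately show ?thesis by (intro exI[of _ "A t$1$1"]) auto
  next
    case False
    obtain c where c: "c = 1 \<or> c = -1" and
      nt: "n t = c *\<^sub>R (if v t = 0 then v' t /\<^sub>R norm (v' t) else v t /\<^sub>R norm (v t))"
      using nform t by blast
    define k where "k = c / norm (v t)"
    have k0: "k \<noteq> 0" using c False k_def by auto
    have ndk: "nd t = of_real k * (A t$1$1 - A t$2$2)"
      using nt False by (simp add: nd_def k_def v_def scaleR_conv_of_real divide_inverse ac_simps)
    have nqk: "nq t = of_real k * (2 * A t$1$2)"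
      using nt False by (simp add: nq_def k_def v_def scaleR_conv_of_real divide_inverse ac_simps)
    have g1: "nd t * u1 t + nq t * u2 t = u1 t" and g2: "cnj (nq t) * u1 t - nd t * u2 t = u2 t"
      using gu t by blast+
    have f1: "of_real k * (A t$1$1 - A t$2$2) * u1 t + of_real k * (2 * A t$1$2) * u2 t = u1 t"
      using g1 unfolding ndk nqk .
    have f2: "cnj (of_real k * (2 * A t$1$2)) * u1 t - of_real k * (A t$1$1 - A t$2$2) * u2 t = u2 t"
      using g2 unfolding ndk nqk .
    show ?thesis using EIG[OF k0 f1 f2 herm[OF t, of 2 1]] by blast
  qed
  define nu where "nu t = sqrt (norm (u1 t)^2 + norm (u2 t)^2)" for t
  have nupos: "nu t > 0" if "t \<in> {a..b}" for t
  proof -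
    have "u1 t \<noteq> 0 \<or> u2 t \<noteq> 0" using gu that by blast
    then have "norm (u1 t)^2 + norm (u2 t)^2 > 0"
    proof
      assume "u1 t \<noteq> 0"
      then have "norm (u1 t)^2 > 0" by simp
      then show ?thesis by (simp add: add_pos_nonneg)
    next
      assume "u2 t \<noteq> 0"
      then have "norm (u2 t)^2 > 0" by simp
      then show ?thesis by (simp add: add_nonneg_pos)
    qed
    then show ?thesis unfolding nu_def by simp
  qed
  define U1 where "U1 t = u1 t / of_real (nu t)" for t
  define U2 where "U2 t = u2 t / of_real (nu t)" for t
  have cnu: "continuous_on {a..b} nu" unfolding nu_def by (intro continuous_intros cu1 cu2)
  have cU1: "continuous_on {a..b} U1" unfolding U1_def
    by (intro continuous_intros cu1 cnu) (use nupos in force)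
  have cU2: "continuous_on {a..b} U2" unfolding U2_def
    by (intro continuous_intros cu2 cnu) (use nupos in force)
  define U where "U t = mkU (U1 t) (U2 t)" for t
  have cU: "continuous_on {a..b} U"
  proof -
    have eq: "U = (\<lambda>t. \<chi> i j. U t $ i $ j)" by (simp add: vec_lambda_eta)
    have "continuous_on {a..b} (\<lambda>t. U t $ i $ j)" for i j
    proof -
      consider "i = 1" "j = 1" | "i = 1" "j = 2" | "i = 2" "j = 1" | "i = 2" "j = 2"
        using exhaust_2[of i] exhaust_2[of j] by blast
      then show ?thesis
        by cases (simp_all add: U_def mkU_nth continuous_intros cU1 cU2)
    qed
    then show ?thesis by (subst eq) (intro continuous_on_vec_lambda)
  qed
  have props: "cmat_unitary (U t) \<and> cmat_diagonal (cmat_adj (U t) ** A t ** U t)"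
    if t: "t \<in> {a..b}" for t
  proof -
    have np: "nu t > 0" using nupos t by auto
    have a1: "U1 t * cnj (U1 t) = of_real (norm (u1 t)^2 / (nu t)^2)"
    proof -
      have "U1 t * cnj (U1 t) = (u1 t * cnj (u1 t)) / (of_real (nu t))^2"
        by (simp add: U1_def power2_eq_square)
      also have "\<dots> = of_real (norm (u1 t)^2) / of_real ((nu t)^2)"
        by (subst complex_norm_square) (simp add: of_real_power)
      also have "\<dots> = of_real (norm (u1 t)^2 / (nu t)^2)" by (simp only: of_real_divide)
      finally show ?thesis .
    qed
    have a2: "U2 t * cnj (U2 t) = of_real (norm (u2 t)^2 / (nu t)^2)"
    proof -
      have "U2 t * cnj (U2 t) = (u2 t * cnj (u2 t)) / (of_real (nu t))^2"
        by (simp add: U2_def power2_eq_square)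
      also have "\<dots> = of_real (norm (u2 t)^2) / of_real ((nu t)^2)"
        by (subst complex_norm_square) (simp add: of_real_power)
      also have "\<dots> = of_real (norm (u2 t)^2 / (nu t)^2)" by (simp only: of_real_divide)
      finally show ?thesis .
    qed
    have S: "(nu t)^2 = norm (u1 t)^2 + norm (u2 t)^2" unfolding nu_def by simp
    have "(nu t)^2 \<noteq> 0" using np by simp
    then have Sne: "norm (u1 t)^2 + norm (u2 t)^2 \<noteq> 0" by (metis S)
    have "U1 t * cnj (U1 t) + U2 t * cnj (U2 t) = of_real ((norm (u1 t)^2 + norm (u2 t)^2) / (nu t)^2)"
      unfolding a1 a2 by (simp add: add_divide_distrib)
    also have "\<dots> = 1" by (simp only: S divide_self_if Sne if_False of_real_1)
    finally have n1: "U1 t * cnj (U1 t) + U2 t * cnj (U2 t) = 1" .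
    obtain l where l1: "A t$1$1 * u1 t + A t$1$2 * u2 t = l * u1 t"
      and l2: "A t$2$1 * u1 t + A t$2$2 * u2 t = l * u2 t" using eig[OF t] by blast
    have e1: "A t$1$1 * U1 t + A t$1$2 * U2 t = l * U1 t"
    proof -
      have "A t$1$1 * U1 t + A t$1$2 * U2 t = (A t$1$1 * u1 t + A t$1$2 * u2 t) / of_real (nu t)"
        by (simp add: U1_def U2_def add_divide_distrib)
      then show ?thesis using l1 by (simp add: U1_def)
    qed
    have e2: "A t$2$1 * U1 t + A t$2$2 * U2 t = l * U2 t"
    proof -
      have "A t$2$1 * U1 t + A t$2$2 * U2 t = (A t$2$1 * u1 t + A t$2$2 * u2 t) / of_real (nu t)"
        by (simp add: U1_def U2_def add_divide_distrib)
      then show ?thesis using l2 by (simp add: U2_def)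
    qed
    have h1: "cnj (A t$1$1) = A t$1$1" using herm[OF t, of 1 1] by (rule sym)
    have h2: "cnj (A t$2$2) = A t$2$2" using herm[OF t, of 2 2] by (rule sym)
    have h3: "A t$2$1 = cnj (A t$1$2)" using herm[OF t, of 2 1] .
    show ?thesis unfolding U_def using unit_mkU[OF n1] diag_mkU[OF h1 h2 h3 e1 e2] by blast
  qed
  show ?thesis using cU props by blast
qed

end
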